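(* Let $1\le K<d$ be integers and $T_\lambda$ as below. For $\lambda\in(0,1)$ let $\bar F_\lambda$ solve $\bar F'(w)=T_\lambda(\bar F(w))-\bar F(w)$, $\bar F(0)=\lambda$, let $\mathbb E[W_\lambda]=\frac1\lambda\int_0^\infty T_\lambda(\bar F_\lambda(w))\,dw$ and $$p_\lambda=1-\sum_{j=0}^{K-1}\frac{K-j}{K}\binom dj(1-\lambda)^j\lambda^{d-j}.$$ Then $$\lim_{\lambda\to0^+}-\frac{\mathbb E[W_\lambda]}{\log(p_\lambda)}=\frac1{d-K+1}\qquad\text{and}\qquad\lim_{\lambda\to1^-}-\frac{\mathbb E[W_\lambda]}{\log(p_\lambda)}=\frac K{d-K}.$$
   Context: $T_\lambda(u)=\frac{\lambda}{K}\sum_{j=0}^{K-1}(K-j)\binom{d}{j}u^{d-j}(1-u)^j$ (LL($d,K$) policy, exponential(1) job sizes); $p_\lambda$ is the probability that a job is assigned to an idle server. *)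

theory Defs
  imports "HOL-Analysis.Analysis"
begin

definition T_LL :: "nat \<Rightarrow> nat \<Rightarrow> real \<Rightarrow> real \<Rightarrow> real" where
  "T_LL d K lam u =
     lam / real K * (\<Sum>j<K. real (K - j) * real (d choose j) * u ^ (d - j) * (1 - u) ^ j)"

definition mean_wait :: "nat \<Rightarrow> nat \<Rightarrow> real \<Rightarrow> (real \<Rightarrow> real) \<Rightarrow> real" where
  "mean_wait d K lam Fb = (1 / lam) * integral {0..} (\<lambda>w. T_LL d K lam (Fb w))"

definition p_idle :: "nat \<Rightarrow> nat \<Rightarrow> real \<Rightarrow> real" where
  "p_idle d K lam =
     1 - (\<Sum>j<K. real (K - j) / real K * real (d choose j) * (1 - lam) ^ j * lam ^ (d - j))"

end

theory Submission
  imports Defs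
begin


definition gg :: "nat \<Rightarrow> nat \<Rightarrow> real \<Rightarrow> real" where
  "gg d K u = (1 / real K) * (\<Sum>j<K. real (K - j) * real (d choose j) * u ^ (d - j - 1) * (1 - u) ^ j)"

lemma binom_mean:
  fixes u :: real
  shows "(\<Sum>j\<le>d. real (d - j) * real (d choose j) * u ^ (d - j) * (1 - u) ^ j) = real d * u"
proof (cases d)
  case 0 then show ?thesis by simp
next
  case (Suc n)
  have "(\<Sum>j\<le>d. real (d - j) * real (d choose j) * u ^ (d - j) * (1 - u) ^ j)
      = (\<Sum>j\<le>Suc n. real d * real (n choose j) * u ^ (Suc n - j) * (1 - u) ^ j)"
  proof (rule sum.cong)
    fix j assume "j \<in> {..Suc n}"
    have "(d - j) * (d choose j) = d * ((d - 1) choose j)" by (rule binomial_absorb_comp)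
    then have "real (d - j) * real (d choose j) = real d * real (n choose j)"
      using Suc by (metis diff_Suc_1 of_nat_mult)
    then show "real (d - j) * real (d choose j) * u ^ (d - j) * (1 - u) ^ j
        = real d * real (n choose j) * u ^ (Suc n - j) * (1 - u) ^ j" using Suc by simp
  qed (simp add: Suc)
  also have "\<dots> = (\<Sum>j\<le>n. real d * real (n choose j) * u ^ (Suc n - j) * (1 - u) ^ j)"
    by (simp add: sum.atMost_Suc)
  also have "\<dots> = real d * u * (\<Sum>j\<le>n. real (n choose j) * (1 - u) ^ j * u ^ (n - j))"
    by (simp add: sum_distrib_left Suc_diff_le mult_ac)
  also have "(\<Sum>j\<le>n. real (n choose j) * (1 - u) ^ j * u ^ (n - j)) = ((1 - u) + u) ^ n"
    by (rule binomial_ring[symmetric])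
  finally show ?thesis by simp
qed

locale LL =
  fixes d K :: nat
  assumes K1: "1 \<le> K" and Kd: "K < d"
begin

abbreviation "g \<equiv> gg d K"

lemma T_eq: "T_LL d K lam u = lam * u * g u"
proof -
  have "(\<Sum>j<K. real (K - j) * real (d choose j) * u ^ (d - j) * (1 - u) ^ j)
      = u * (\<Sum>j<K. real (K - j) * real (d choose j) * u ^ (d - j - 1) * (1 - u) ^ j)"
    unfolding sum_distrib_left
  proof (rule sum.cong)
    fix j assume "j \<in> {..<K}"
    then have "d - j = Suc (d - j - 1)" using Kd by auto
    then show "real (K - j) * real (d choose j) * u ^ (d - j) * (1 - u) ^ j =
      u * (real (K - j) * real (d choose j) * u ^ (d - j - 1) * (1 - u) ^ j)"
      by (metis (no_types, lifting) mult.commute mult.left_commute power_Suc)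
  qed simp
  then show ?thesis unfolding T_LL_def gg_def by (simp add: mult_ac)
qed

lemma p_eq: "p_idle d K lam = 1 - lam * g lam"
proof -
  have "lam * g lam = (\<Sum>j<K. real (K - j) / real K * real (d choose j) * (1 - lam) ^ j * lam ^ (d - j))"
    unfolding gg_def sum_distrib_left
  proof (rule sum.cong)
    fix j assume "j \<in> {..<K}"
    then have "d - j = Suc (d - j - 1)" using Kd by auto
    then have "lam ^ (d - j) = lam * lam ^ (d - j - 1)" by (metis power_Suc)
    then show "lam * (1 / real K * (real (K - j) * real (d choose j) * lam ^ (d - j - 1) * (1 - lam) ^ j)) =
         real (K - j) / real K * real (d choose j) * (1 - lam) ^ j * lam ^ (d - j)"
      by (simp add: field_simps)
  qed simp
  then show ?thesis unfolding p_idle_def by simp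
qed

lemma g_nonneg: "0 \<le> u \<Longrightarrow> u \<le> 1 \<Longrightarrow> 0 \<le> g u"
  unfolding gg_def by (intro mult_nonneg_nonneg sum_nonneg) auto

lemma g_cont: "continuous_on S g"
  unfolding gg_def by (intro continuous_intros)

lemma g_isCont: "isCont g x"
  unfolding gg_def by (intro continuous_intros)

end

context LL begin

lemma g0: "g 0 = 0"
  unfolding gg_def using Kd by (intro mult_eq_0_iff[THEN iffD2] disjI2 sum.neutral) auto

lemma key_ineq:
  fixes u :: real assumes u: "0 \<le> u" "u \<le> 1"
  shows "real K * u * (1 - g u) \<ge> min (real (d - K)) (real K) / real d * (real d * u ^ (d - 1) * (1 - u))"
proof -
  define b where "b j = real (d choose j) * u ^ (d - j) * (1 - u) ^ j" for j
  define w where "w j = real K / real d * real (d - j) - (if j < K then real (K - j) else 0)" for j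
  have dpos: "real d > 0" using Kd by simp
  have S1: "(\<Sum>j\<le>d. real K / real d * real (d - j) * b j) = real K * u"
  proof -
    have "(\<Sum>j\<le>d. real K / real d * real (d - j) * b j) = real K / real d *
        (\<Sum>j\<le>d. real (d - j) * real (d choose j) * u ^ (d - j) * (1 - u) ^ j)"
      unfolding sum_distrib_left b_def by (simp add: mult_ac)
    also have "\<dots> = real K / real d * (real d * u)" by (simp only: binom_mean)
    also have "\<dots> = real K * u" using dpos by simp
    finally show ?thesis .
  qed
  have S2: "(\<Sum>j\<le>d. (if j < K then real (K - j) else 0) * b j) = real K * u * g u"
  proof -
    have "(\<Sum>j\<le>d. (if j < K then real (K - j) else 0) * b j) = (\<Sum>j<K. (if j < K then real (K - j) else 0) * b j)"
      using Kd by (intro sum.mono_neutral_right) auto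
    also have "\<dots> = (\<Sum>j<K. real (K - j) * real (d choose j) * u ^ (d - j) * (1 - u) ^ j)"
      unfolding b_def by (intro sum.cong) auto
    also have "\<dots> = real K * T_LL d K 1 u" unfolding T_LL_def using K1 by simp
    also have "\<dots> = real K * u * g u" by (simp add: T_eq)
    finally show ?thesis .
  qed
  have id: "real K * u * (1 - g u) = (\<Sum>j\<le>d. w j * b j)"
    unfolding w_def left_diff_distrib sum_subtractf S1 S2 by (simp add: algebra_simps)
  have wnn: "w j \<ge> 0" if "j \<le> d" for j
  proof (cases "j < K")
    case True
    have e: "real (d - j) = real d - real j" "real (K - j) = real K - real j" "real (d - K) = real d - real K"
      using True Kd by (auto simp: of_nat_diff)
    have "w j = real j * real (d - K) / real d"
      unfolding w_def e using dpos True by (simp add: field_simps)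
    then show ?thesis by simp
  next
    case False then show ?thesis by (simp add: w_def)
  qed
  have bnn: "b j \<ge> 0" for j using u by (simp add: b_def)
  have w1: "w 1 \<ge> min (real (d - K)) (real K) / real d"
  proof (cases "1 < K")
    case True
    have "w 1 = real K / real d * real (d - 1) - real (K - 1)" using True by (simp add: w_def)
    also have "\<dots> = real (d - K) / real d"
    proof -
      have e: "real (d - 1) = real d - 1" "real (K - 1) = real K - 1" "real (d - K) = real d - real K"
        using True Kd by (auto simp: of_nat_diff)
      show ?thesis unfolding e using dpos by (simp add: field_simps)
    qed
    finally show ?thesis using dpos by (simp add: divide_right_mono)
  next
    case False then have "K = 1" using K1 by simp
    then have "w 1 = real (d - 1) / real d" using Kd by (simp add: w_def)
    then show ?thesis using dpos \<open>K = 1\<close> by (simp add: divide_right_mono)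
  qed
  have b1: "b 1 = real d * u ^ (d - 1) * (1 - u)" by (simp add: b_def)
  have "w 1 * b 1 \<le> (\<Sum>j\<le>d. w j * b j)"
    using Kd wnn bnn by (intro member_le_sum[where f="\<lambda>j. w j * b j"]) auto
  moreover have "min (real (d - K)) (real K) / real d * b 1 \<le> w 1 * b 1"
    using w1 bnn by (intro mult_right_mono) auto
  ultimately show ?thesis using id b1 by simp
qed

lemma g_lt1: assumes "0 \<le> u" "u < 1" shows "g u < 1"
proof (cases "u = 0")
  case True then show ?thesis by (simp add: g0)
next
  case False
  then have u: "0 < u" using assms by simp
  have "min (real (d - K)) (real K) > 0" using K1 Kd by simp
  moreover have "real d * u ^ (d - 1) * (1 - u) > 0" using u assms Kd by simp
  moreover have "real d > 0" using Kd by simp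
  ultimately have "min (real (d - K)) (real K) / real d * (real d * u ^ (d - 1) * (1 - u)) > 0"
    by (metis mult_pos_pos divide_pos_pos)
  then have "real K * u * (1 - g u) > 0"
    using key_ineq[of u] assms by linarith
  moreover have "real K * u > 0" using u K1 by simp
  ultimately have "1 - g u > 0" using zero_less_mult_pos by blast
  then show ?thesis by simp
qed

lemma g_le1: assumes "0 \<le> u" "u \<le> 1" shows "g u \<le> 1"
proof (cases "u = 1")
  case True
  have "min (real (d - K)) (real K) / real d * (real d * u ^ (d - 1) * (1 - u)) \<ge> 0"
    using assms by simp
  then have "real K * u * (1 - g u) \<ge> 0"
    using key_ineq[of u] assms by linarith
  moreover have "real K * u > 0" using True K1 by simp
  ultimately have "1 - g u \<ge> 0" using zero_le_mult_iff by (metis not_less)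
  then show ?thesis by simp
next
  case False then show ?thesis using g_lt1[of u] assms by simp
qed

end


lemma term_deriv1:
  "((\<lambda>u::real. u ^ n * (1 - u) ^ j) has_real_derivative
     (if j = 0 then real n else if j = 1 then -1 else 0)) (at 1)"
proof -
  have d2: "((\<lambda>u::real. 1 - u) has_real_derivative 0 - 1) (at 1)"
    by (rule DERIV_diff[OF DERIV_const DERIV_ident])
  have "((\<lambda>u::real. u ^ n * (1 - u) ^ j) has_real_derivative
     (1 ^ n * (of_nat j * ((0 - 1) * (1 - 1) ^ (j - Suc 0))) + real n * (1 ^ (n - Suc 0)) * (1 - 1) ^ j)) (at 1)"
    by (rule DERIV_mult'[OF DERIV_pow DERIV_power[OF d2]])
  moreover have "(1::real) ^ n * (of_nat j * ((0 - 1) * (1 - 1) ^ (j - Suc 0))) + real n * (1 ^ (n - Suc 0)) * (1 - 1) ^ j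
     = (if j = 0 then real n else if j = 1 then -1 else (0::real))"
    by (cases j) auto
  ultimately show ?thesis by simp
qed

context LL begin

definition r :: "real \<Rightarrow> real" where
  "r u = (1 / real K) * (\<Sum>j<K. real (K - j) * real (d choose j) * u ^ (K - 1 - j) * (1 - u) ^ j)"

lemma g_r: "g u = u ^ (d - K) * r u"
  unfolding gg_def r_def sum_distrib_left
  apply (simp add: mult_ac)
  apply (intro arg_cong[where f="\<lambda>x. x / real K"] sum.cong refl)
  subgoal for j
    using Kd by (simp add: power_add[symmetric] mult_ac)
  done

lemma r_cont: "continuous_on S r"
  unfolding r_def by (intro continuous_intros)

lemma r_isCont: "isCont r x"
  unfolding r_def by (intro continuous_intros)

lemma r0: "r 0 = real (d choose (K - 1)) / real K"
proof -
  have "(\<Sum>j<K. real (K - j) * real (d choose j) * (0::real) ^ (K - 1 - j) * (1 - 0) ^ j)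
     = (\<Sum>j\<in>{K - 1}. real (K - j) * real (d choose j) * (0::real) ^ (K - 1 - j) * (1 - 0) ^ j)"
    using K1 by (intro sum.mono_neutral_right) auto
  then show ?thesis unfolding r_def using K1 by simp
qed

lemma r_pos: assumes "0 \<le> u" "u < 1" shows "r u > 0"
proof -
  have "real (K - (K - 1)) * real (d choose (K - 1)) * u ^ (K - 1 - (K - 1)) * (1 - u) ^ (K - 1)
     \<le> (\<Sum>j<K. real (K - j) * real (d choose j) * u ^ (K - 1 - j) * (1 - u) ^ j)"
    using K1 assms by (intro member_le_sum[where f="\<lambda>j. real (K - j) * real (d choose j) * u ^ (K - 1 - j) * (1 - u) ^ j"]) auto
  moreover have "real (K - (K - 1)) * real (d choose (K - 1)) * u ^ (K - 1 - (K - 1)) * (1 - u) ^ (K - 1) > 0"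
    using K1 Kd assms by simp
  ultimately show ?thesis unfolding r_def using K1 by simp
qed

lemma g_pos: assumes "0 < u" "u < 1" shows "g u > 0"
  using g_r r_pos assms by simp

lemma g1: "g 1 = 1"
proof -
  have "(\<Sum>j<K. real (K - j) * real (d choose j) * (1::real) ^ (d - j - 1) * (1 - 1) ^ j)
     = (\<Sum>j\<in>{0}. real (K - j) * real (d choose j) * (1::real) ^ (d - j - 1) * (1 - 1) ^ j)"
    using K1 by (intro sum.mono_neutral_right) auto
  then show ?thesis unfolding gg_def using K1 by simp
qed

lemma g_deriv1: "(g has_real_derivative (real (d - K) / real K)) (at 1)"
proof -
  define c where "c j = real (K - j) * real (d choose j)" for j
  define D where "D j = (if j = 0 then real (d - j - 1) else if j = 1 then -1 else (0::real))" for j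
  have g_eq: "g = (\<lambda>u. (1 / real K) * (\<Sum>j<K. c j * (u ^ (d - j - 1) * (1 - u) ^ j)))"
    unfolding gg_def c_def by (simp add: mult_ac)
  have "((\<lambda>u. (1 / real K) * (\<Sum>j<K. c j * (u ^ (d - j - 1) * (1 - u) ^ j))) has_real_derivative
      (1 / real K) * (\<Sum>j<K. c j * D j)) (at 1)"
    unfolding D_def
    apply (rule DERIV_cmult)
    apply (rule DERIV_sum)
    apply (rule DERIV_cmult)
    apply (rule term_deriv1)
    done
  moreover have "(\<Sum>j<K. c j * D j) = real (d - K)"
  proof (cases "K = 1")
    case True
    then show ?thesis by (simp add: c_def D_def)
  next
    case False
    then have K2: "2 \<le> K" using K1 by simp
    have "(\<Sum>j<K. c j * D j) = (\<Sum>j<2. c j * D j)"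
      using K2 by (intro sum.mono_neutral_right) (auto simp: D_def)
    also have "\<dots> = real K * real (d - 1) - real (K - 1) * real d"
      by (simp add: c_def D_def numeral_2_eq_2)
    also have "\<dots> = real (d - K) * 1"
    proof -
      have e: "real (d - 1) = real d - 1" "real (K - 1) = real K - 1" "real (d - K) = real d - real K"
        using K2 Kd by (auto simp: of_nat_diff)
      show ?thesis unfolding e by (simp add: algebra_simps)
    qed
    finally show ?thesis by simp
  qed
  ultimately show ?thesis using g_eq by simp
qed

lemma g_slope1: "((\<lambda>u. (1 - g u) / (1 - u)) \<longlongrightarrow> real (d - K) / real K) (at_left 1)"
proof -
  have "((\<lambda>y. (g y - g 1) / (y - 1)) \<longlongrightarrow> real (d - K) / real K) (at 1)"
    using g_deriv1 unfolding has_field_derivative_iff by simp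
  then have "((\<lambda>y. (g y - g 1) / (y - 1)) \<longlongrightarrow> real (d - K) / real K) (at_left 1)"
    by (rule tendsto_mono[rotated]) (rule at_le, simp)
  moreover have "(g y - g 1) / (y - 1) = (1 - g y) / (1 - y)" for y
    by (metis g1 minus_diff_eq minus_divide_divide)
  ultimately show ?thesis by simp
qed

end

context LL begin

lemma g_cont_comp[continuous_intros]: "continuous_on S f \<Longrightarrow> continuous_on S (\<lambda>x. g (f x))"
  unfolding gg_def by (intro continuous_intros)

lemma ode_pos:
  fixes f :: "real \<Rightarrow> real" and lam :: real
  assumes lam: "0 < lam" "lam < 1" and f0: "f 0 = lam"
    and fode: "\<And>w. 0 \<le> w \<Longrightarrow> (f has_real_derivative (lam * f w * g (f w) - f w)) (at w within {0..})"
    and b: "0 \<le> b"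
  shows "f b = lam * exp (- integral {0..b} (\<lambda>w. 1 - lam * g (f w)))"
proof -
  have cont: "continuous_on {0..} f"
    unfolding continuous_on_eq_continuous_within using fode DERIV_continuous by (metis atLeast_iff)
  define h where "h w = 1 - lam * g (f w)" for w
  have hc: "continuous_on {0..b} h"
    unfolding h_def by (intro continuous_intros continuous_on_subset[OF cont]) auto
  define H where "H x = integral {0..x} h" for x
  define G where "G x = f x * exp (H x)" for x
  have "\<exists>c. \<forall>x\<in>{0..b}. G x = c"
  proof (rule has_field_derivative_zero_constant)
    fix x assume x: "x \<in> {0..b}"
    have dH: "(H has_real_derivative h x) (at x within {0..b})"
      unfolding H_def by (rule integral_has_real_derivative[OF hc x])
    have df: "(f has_real_derivative (lam * f x * g (f x) - f x)) (at x within {0..b})"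
      using x by (intro DERIV_subset[OF fode[of x]]) auto
    have "(G has_real_derivative (f x * (exp (H x) * h x) + (lam * f x * g (f x) - f x) * exp (H x))) (at x within {0..b})"
      unfolding G_def by (rule DERIV_mult'[OF df DERIV_chain2[OF DERIV_exp dH]])
    moreover have "f x * (exp (H x) * h x) + (lam * f x * g (f x) - f x) * exp (H x) = 0"
      unfolding h_def by (simp add: algebra_simps)
    ultimately show "(G has_real_derivative 0) (at x within {0..b})" by simp
  qed simp
  then obtain c where c: "\<And>x. x \<in> {0..b} \<Longrightarrow> G x = c" by blast
  have "G 0 = lam" unfolding G_def H_def using f0 by simp
  then have "G b = lam" using c[of 0] c[of b] b by simp
  then have "f b = lam / exp (H b)" unfolding G_def by (simp add: field_simps)
  then show ?thesis unfolding H_def h_def by (simp add: exp_minus field_simps)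
qed

lemma ode_le:
  fixes f :: "real \<Rightarrow> real" and lam :: real
  assumes lam: "0 < lam" "lam < 1" and f0: "f 0 = lam"
    and fode: "\<And>w. 0 \<le> w \<Longrightarrow> (f has_real_derivative (lam * f w * g (f w) - f w)) (at w within {0..})"
    and w1: "0 \<le> w1"
  shows "f w1 \<le> lam"
proof (rule ccontr)
  assume "\<not> f w1 \<le> lam"
  then have fw1: "f w1 > lam" by simp
  have cont: "continuous_on {0..} f"
    unfolding continuous_on_eq_continuous_within using fode DERIV_continuous by (metis atLeast_iff)
  define S where "S = {w. 0 \<le> w \<and> f w > lam}"
  define s where "s = Inf S"
  have Sne: "S \<noteq> {}" using fw1 w1 by (auto simp: S_def)
  have Sbdd: "bdd_below S" by (auto simp: S_def bdd_below_def)
  have s0: "0 \<le> s" unfolding s_def using Sne by (intro cInf_greatest) (auto simp: S_def)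
  have below: "f w \<le> lam" if "0 \<le> w" "w < s" for w
  proof (rule ccontr)
    assume "\<not> f w \<le> lam"
    then have "w \<in> S" using that by (auto simp: S_def)
    then have "s \<le> w" unfolding s_def using Sbdd by (rule cInf_lower)
    then show False using that by simp
  qed
  have cs: "continuous (at s within {0..}) f"
    using cont s0 continuous_on_eq_continuous_within by auto
  have fs_ge: "f s \<ge> lam"
  proof (rule ccontr)
    assume "\<not> f s \<ge> lam"
    then have "f s < lam" by simp
    then have "\<forall>\<^sub>F x in at s within {0..}. f x < lam"
      using order_tendstoD(2)[OF cs[unfolded continuous_within]] by blast
    then obtain e where e: "e > 0" "\<And>x. x \<in> {0..} \<Longrightarrow> x \<noteq> s \<Longrightarrow> dist x s < e \<Longrightarrow> f x < lam"
      unfolding eventually_at by auto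
    obtain x where x: "x \<in> S" "x < s + e" using cInf_lessD[OF Sne, of "s + e"] e s_def by auto
    have "s \<le> x" using x Sbdd unfolding s_def by (simp add: cInf_lower)
    then have "x \<noteq> s \<Longrightarrow> f x < lam" using e x s0 by (simp add: dist_real_def)
    moreover have "f s < lam" by fact
    ultimately show False using x by (cases "x = s") (auto simp: S_def)
  qed
  have fs_le: "f s \<le> lam"
  proof (cases "s = 0")
    case True then show ?thesis using f0 by simp
  next
    case False
    then have sp: "s > 0" using s0 by simp
    show ?thesis
    proof (rule ccontr)
      assume "\<not> f s \<le> lam"
      then have "f s > lam" by simp
      then have "\<forall>\<^sub>F x in at s within {0..}. f x > lam"
        using order_tendstoD(1)[OF cs[unfolded continuous_within]] by blast
      then obtain e where e: "e > 0" "\<And>x. x \<in> {0..} \<Longrightarrow> x \<noteq> s \<Longrightarrow> dist x s < e \<Longrightarrow> f x > lam"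
        unfolding eventually_at by auto
      define x where "x = max 0 (s - e / 2)"
      have "x \<in> {0..}" "x \<noteq> s" "dist x s < e" "x < s"
        using e sp by (auto simp: x_def dist_real_def)
      then have "f x > lam" using e by blast
      moreover have "f x \<le> lam" using below \<open>x < s\<close> by (simp add: x_def)
      ultimately show False by simp
    qed
  qed
  have fs: "f s = lam" using fs_ge fs_le by simp
  have neg: "lam * f s * g (f s) - f s < 0"
  proof -
    have "g lam \<le> 1" using lam by (intro g_le1) auto
    then have "lam * g lam \<le> lam * 1" using lam by (intro mult_left_mono) auto
    then have "lam * g lam < 1" using lam by linarith
    then have "lam * (lam * g lam - 1) < 0" using lam by (simp add: mult_pos_neg)
    then show ?thesis using fs by (simp add: algebra_simps)
  qed
  obtain e where e: "e > 0" "\<And>h. h > 0 \<Longrightarrow> s + h \<in> {0..} \<Longrightarrow> h < e \<Longrightarrow> f s > f (s + h)"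
    using has_real_derivative_neg_dec_right[OF fode[OF s0] neg] by blast
  obtain x where x: "x \<in> S" "x < s + e" using cInf_lessD[OF Sne, of "s + e"] e s_def by auto
  have "s \<le> x" using x Sbdd unfolding s_def by (simp add: cInf_lower)
  moreover have "x \<noteq> s" using x fs by (auto simp: S_def)
  ultimately have h1: "x - s > 0" by simp
  have h2: "s + (x - s) \<in> {0..}" using \<open>s \<le> x\<close> s0 by simp
  have h3: "x - s < e" using x by simp
  have "f s > f (s + (x - s))" by (rule e(2)[OF h1 h2 h3])
  then have "f x < lam" using fs by simp
  then show False using x by (auto simp: S_def)
qed

end

context LL begin

lemma ode_mean:
  fixes f :: "real \<Rightarrow> real" and lam :: real
  assumes lam: "0 < lam" "lam < 1" and f0: "f 0 = lam"
    and fode: "\<And>w. 0 \<le> w \<Longrightarrow> (f has_real_derivative (lam * f w * g (f w) - f w)) (at w within {0..})"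
  shows "mean_wait d K lam f = integral {0..lam} (\<lambda>u. g u / (1 - lam * g u))"
proof -
  have cont: "continuous_on {0..} f"
    unfolding continuous_on_eq_continuous_within using fode DERIV_continuous by (metis atLeast_iff)
  have fpos: "f w > 0" if "0 \<le> w" for w
    using ode_pos[OF lam f0 fode that] lam by simp
  have fle: "f w \<le> lam" if "0 \<le> w" for w
    using ode_le[OF lam f0 fode that] .
  have gf1: "g (f w) \<le> 1" if "0 \<le> w" for w
    using fpos[OF that] fle[OF that] lam by (intro g_le1) auto
  have fbound: "f b \<le> lam * exp (- ((1 - lam) * b))" if b: "0 \<le> b" for b
  proof -
    define h where "h w = 1 - lam * g (f w)" for w
    have hc: "continuous_on {0..b} h"
      unfolding h_def by (intro continuous_intros continuous_on_subset[OF cont]) auto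
    have "integral {0..b} (\<lambda>_. 1 - lam) \<le> integral {0..b} h"
    proof (rule integral_le)
      show "h integrable_on {0..b}" using hc by (rule integrable_continuous_real)
      fix x assume "x \<in> {0..b}"
      then have "g (f x) \<le> 1" using gf1 by simp
      then have "lam * g (f x) \<le> lam" using lam by (simp add: mult_left_le)
      then show "1 - lam \<le> h x" unfolding h_def by simp
    qed (intro integrable_continuous_real continuous_intros)
    then have "(1 - lam) * b \<le> integral {0..b} h" using b by (simp add: mult.commute)
    then show ?thesis using ode_pos[OF lam f0 fode b] lam unfolding h_def by simp
  qed
  have flim: "(f \<longlongrightarrow> 0) at_top"
  proof (rule tendsto_sandwich[of "\<lambda>_. 0" _ _ "\<lambda>b. lam * exp (- ((1 - lam) * b))"])
    show "\<forall>\<^sub>F n in at_top. 0 \<le> f n"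
      using eventually_ge_at_top[of 0] by eventually_elim (simp add: fpos less_imp_le)
    show "\<forall>\<^sub>F n in at_top. f n \<le> lam * exp (- ((1 - lam) * n))"
      using eventually_ge_at_top[of 0] by eventually_elim (rule fbound)
    have "LIM x at_top. (- (1 - lam)) * x :> at_bot"
      using lam by (intro filterlim_tendsto_neg_mult_at_bot[OF tendsto_const _ filterlim_ident]) auto
    then have "((\<lambda>x. exp ((- (1 - lam)) * x)) \<longlongrightarrow> 0) at_top"
      by (rule filterlim_compose[OF exp_at_bot])
    then have "((\<lambda>x. lam * exp ((- (1 - lam)) * x)) \<longlongrightarrow> lam * 0) at_top"
      by (intro tendsto_mult tendsto_const)
    moreover have "(\<lambda>b. lam * exp (- ((1 - lam) * b))) = (\<lambda>x. lam * exp ((- (1 - lam)) * x))"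
      by (simp add: algebra_simps)
    ultimately show "((\<lambda>b. lam * exp (- ((1 - lam) * b))) \<longlongrightarrow> 0) at_top" by simp
  qed simp
  define phi where "phi u = lam * (g u / (1 - lam * g u))" for u
  define Phi where "Phi u = integral {0..u} phi" for u
  have den: "1 - lam * g u > 0" if "0 \<le> u" "u \<le> 1" for u
  proof -
    have "lam * g u \<le> lam * 1" using g_le1[OF that] lam by (intro mult_left_mono) auto
    then show ?thesis using lam by linarith
  qed
  have phic: "continuous_on {0..1} phi"
    unfolding phi_def
    apply (intro continuous_intros g_cont)
    subgoal proof (intro ballI)
      fix x :: real assume "x \<in> {0..1}" then show "1 - lam * g x \<noteq> 0" using den[of x] by auto
    qed
    done
  have dPhi: "DERIV Phi u :> phi u" if "0 < u" "u < 1" for u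
  proof -
    have "(Phi has_real_derivative phi u) (at u within {0..1})"
      unfolding Phi_def using that by (intro integral_has_real_derivative[OF phic]) auto
    then show ?thesis using that by (simp add: at_within_Icc_at)
  qed
  have Phic: "continuous_on {0..1} Phi"
    unfolding Phi_def by (intro indefinite_integral_continuous_1 integrable_continuous_real phic)
  have Tint: "((\<lambda>w. T_LL d K lam (f w)) has_integral (Phi lam - Phi (f W))) {0..W}" if W: "0 \<le> W" for W
  proof -
    have "((\<lambda>w. T_LL d K lam (f w)) has_integral ((- Phi (f W)) - (- Phi (f 0)))) {0..W}"
    proof (rule fundamental_theorem_of_calculus[OF W])
      fix x assume x: "x \<in> {0..W}"
      have fx: "0 < f x" "f x < 1" using fpos[of x] fle[of x] x lam by auto
      have df: "(f has_real_derivative (lam * f x * g (f x) - f x)) (at x within {0..W})"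
        using x by (intro DERIV_subset[OF fode[of x]]) auto
      have "((\<lambda>x. Phi (f x)) has_real_derivative phi (f x) * (lam * f x * g (f x) - f x)) (at x within {0..W})"
        by (rule DERIV_chain2[OF dPhi[OF fx] df])
      then have "((\<lambda>x. - Phi (f x)) has_real_derivative - (phi (f x) * (lam * f x * g (f x) - f x))) (at x within {0..W})"
        by (rule DERIV_minus)
      moreover have "- (phi (f x) * (lam * f x * g (f x) - f x)) = T_LL d K lam (f x)"
      proof -
        have nz: "1 - lam * g (f x) \<noteq> 0" using den[of "f x"] fx by simp
        have "- (phi (f x) * (lam * f x * g (f x) - f x)) = lam * f x * g (f x)"
          unfolding phi_def using nz by (simp add: field_simps)
        then show ?thesis by (simp add: T_eq)
      qed
      ultimately show "((\<lambda>x. - Phi (f x)) has_vector_derivative T_LL d K lam (f x)) (at x within {0..W})"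
        by (simp add: has_real_derivative_iff_has_vector_derivative)
    qed
    then show ?thesis using f0 by simp
  qed
  have Phi0: "Phi 0 = 0" unfolding Phi_def by simp
  have "((\<lambda>w. T_LL d K lam (f w)) has_integral Phi lam) {0..}"
  proof (rule has_integral_to_inf)
    fix y :: real
    show "(\<lambda>w. T_LL d K lam (f w)) integrable_on {0..y}"
    proof (cases "0 \<le> y")
      case True show ?thesis using Tint[OF True] by (rule has_integral_integrable)
    next
      case False then show ?thesis by (simp add: integrable_on_empty)
    qed
  next
    fix y :: real assume y: "0 \<le> y"
    have "0 \<le> lam * f y * g (f y)" using fpos[OF y] fle[OF y] lam g_nonneg[of "f y"] by simp
    then show "0 \<le> T_LL d K lam (f y)" by (simp add: T_eq)
  next
    have "filterlim f (at_right 0) at_top"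
      using flim by (rule tendsto_imp_filterlim_at_right)
        (use eventually_ge_at_top[of 0] in \<open>eventually_elim, simp add: fpos\<close>)
    moreover have "(Phi \<longlongrightarrow> Phi 0) (at_right 0)"
    proof -
      have "(Phi \<longlongrightarrow> Phi 0) (at 0 within {0..1})"
        using Phic unfolding continuous_on_def by simp
      moreover have "at (0::real) within {0..1} = at_right 0"
        by (rule at_within_Icc_at_right) simp
      ultimately show ?thesis by simp
    qed
    ultimately have "((\<lambda>y. Phi (f y)) \<longlongrightarrow> Phi 0) at_top"
      by (rule filterlim_compose[rotated])
    then have "((\<lambda>y. Phi lam - Phi (f y)) \<longlongrightarrow> Phi lam - 0) at_top"
      unfolding Phi0 by (intro tendsto_diff tendsto_const)
    moreover have "\<forall>\<^sub>F y in at_top. Phi lam - Phi (f y) = integral {0..y} (\<lambda>w. T_LL d K lam (f w))"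
      using eventually_ge_at_top[of 0] by eventually_elim (simp add: integral_unique[OF Tint])
    ultimately show "((\<lambda>y. integral {0..y} (\<lambda>w. T_LL d K lam (f w))) \<longlongrightarrow> Phi lam) at_top"
      by (simp add: tendsto_cong)
  qed
  then have "integral {0..} (\<lambda>w. T_LL d K lam (f w)) = Phi lam" by (rule integral_unique)
  moreover have "integral {0..lam} phi = lam * integral {0..lam} (\<lambda>u. g u / (1 - lam * g u))"
    unfolding phi_def by (rule integral_mult_right)
  ultimately show ?thesis unfolding mean_wait_def Phi_def using lam by simp
qed

end

context LL begin

definition "EE lam = integral {0..lam} (\<lambda>u. g u / (1 - lam * g u))"
definition "AA x = integral {0..x} g"

lemma ev01: "eventually (\<lambda>x. 0 < x \<and> x < 1) (at_right (0::real))"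
  using eventually_at_right_real[of 0 1] by (rule eventually_mono) auto

lemma ev01l: "eventually (\<lambda>x. 0 < x \<and> x < 1) (at_left (1::real))"
  using eventually_at_left_real[of 0 1] by (rule eventually_mono) auto

lemma den_pos: "0 \<le> lam \<Longrightarrow> lam < 1 \<Longrightarrow> 0 \<le> u \<Longrightarrow> u \<le> 1 \<Longrightarrow> 1 - lam * g u \<ge> 1 - lam"
proof -
  assume a: "0 \<le> lam" "lam < 1" "0 \<le> u" "u \<le> 1"
  have "lam * g u \<le> lam * 1" using g_le1[of u] a by (intro mult_left_mono) auto
  then show ?thesis by linarith
qed

lemma integrand_cont: "0 \<le> lam \<Longrightarrow> lam < 1 \<Longrightarrow> continuous_on {0..1} (\<lambda>u. g u / (1 - lam * g u))"
  apply (intro continuous_intros g_cont)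
  subgoal proof (intro ballI)
    fix x :: real assume "0 \<le> lam" "lam < 1" "x \<in> {0..1}"
    then show "1 - lam * g x \<noteq> 0" using den_pos[of lam x] by auto
  qed
  done

lemma integrand_int: "0 \<le> lam \<Longrightarrow> lam < 1 \<Longrightarrow> 0 \<le> a \<Longrightarrow> b \<le> 1 \<Longrightarrow>
   (\<lambda>u. g u / (1 - lam * g u)) integrable_on {a..b}"
  by (rule integrable_continuous_real, rule continuous_on_subset[OF integrand_cont]) auto

lemma g_int: "g integrable_on {a..b}"
  by (intro integrable_continuous_real g_cont)

lemma AA_deriv: "0 < x \<Longrightarrow> x < 1 \<Longrightarrow> DERIV AA x :> g x"
proof -
  assume x: "0 < x" "x < 1"
  have "(AA has_real_derivative g x) (at x within {0..1})"
    unfolding AA_def using x by (intro integral_has_real_derivative g_cont) auto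
  then show ?thesis using x by (simp add: at_within_Icc_at)
qed

lemma AA_lim: "(AA \<longlongrightarrow> 0) (at_right 0)"
proof -
  have "continuous_on {0..1} AA"
    unfolding AA_def by (intro indefinite_integral_continuous_1 g_int)
  then have "(AA \<longlongrightarrow> AA 0) (at 0 within {0..1})"
    unfolding continuous_on_def by simp
  moreover have "at (0::real) within {0..1} = at_right 0"
    by (rule at_within_Icc_at_right) simp
  moreover have "AA 0 = 0" unfolding AA_def by simp
  ultimately show ?thesis by simp
qed

lemma AA_over: "((\<lambda>x. AA x / x ^ (d - K + 1)) \<longlongrightarrow> r 0 / real (d - K + 1)) (at_right 0)"
proof (rule lhopital_right_0[where f'=g and g'="\<lambda>x. real (d - K + 1) * x ^ (d - K)"])
  show "(AA \<longlongrightarrow> 0) (at_right 0)" by (rule AA_lim)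
  have "((\<lambda>x::real. x ^ (d - K + 1)) \<longlongrightarrow> 0 ^ (d - K + 1)) (at_right 0)"
    by (intro tendsto_power tendsto_ident_at)
  then show "((\<lambda>x::real. x ^ (d - K + 1)) \<longlongrightarrow> 0) (at_right 0)" by simp
  show "\<forall>\<^sub>F x in at_right 0. x ^ (d - K + 1) \<noteq> (0::real)"
    using ev01 by (rule eventually_mono) simp
  show "\<forall>\<^sub>F x in at_right 0. real (d - K + 1) * x ^ (d - K) \<noteq> (0::real)"
    using ev01 by (rule eventually_mono) simp
  show "\<forall>\<^sub>F x in at_right 0. DERIV AA x :> g x"
    using ev01 by (rule eventually_mono) (simp add: AA_deriv)
  show "\<forall>\<^sub>F x in at_right 0. ((\<lambda>x. x ^ (d - K + 1)) has_real_derivative real (d - K + 1) * x ^ (d - K)) (at x)"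
    using ev01 by (rule eventually_mono) (use DERIV_pow[of "d - K + 1"] in simp)
  have "((\<lambda>x. r x / real (d - K + 1)) \<longlongrightarrow> r 0 / real (d - K + 1)) (at_right 0)"
    by (intro tendsto_divide tendsto_const) (auto intro: isCont_tendsto_compose[OF r_isCont] tendsto_ident_at)
  moreover have "\<forall>\<^sub>F x in at_right 0. r x / real (d - K + 1) = g x / (real (d - K + 1) * x ^ (d - K))"
    using ev01 by (rule eventually_mono) (simp add: g_r)
  ultimately show "((\<lambda>x. g x / (real (d - K + 1) * x ^ (d - K))) \<longlongrightarrow> r 0 / real (d - K + 1)) (at_right 0)"
    by (rule Lim_transform_eventually)
qed

end

context LL begin

lemma EE_bounds:
  assumes x: "0 < x" "x < 1"
  shows "AA x \<le> EE x" "EE x \<le> AA x / (1 - x)" "0 \<le> AA x"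
proof -
  have pt: "g u \<le> g u / (1 - x * g u) \<and> g u / (1 - x * g u) \<le> g u / (1 - x)" if u: "u \<in> {0..x}" for u
  proof -
    have u1: "0 \<le> u" "u \<le> 1" using u x by auto
    have D1: "1 - x * g u \<ge> 1 - x" using den_pos[of x u] u1 x by simp
    have D2: "1 - x * g u \<le> 1" using g_nonneg[OF u1] x by simp
    have gn: "0 \<le> g u" using g_nonneg[OF u1] .
    have D0: "1 - x * g u > 0" using D1 x by linarith
    have "g u * (1 - x * g u) \<le> g u" using gn D2 by (simp add: mult_left_le)
    then have a: "g u \<le> g u / (1 - x * g u)" using D0 by (simp add: le_divide_eq)
    have b: "g u / (1 - x * g u) \<le> g u / (1 - x)"
      using D1 gn x D0 by (intro divide_left_mono) auto
    show ?thesis using a b by simp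
  qed
  have i1: "(\<lambda>u. g u / (1 - x * g u)) integrable_on {0..x}" using x by (intro integrand_int) auto
  show "AA x \<le> EE x" unfolding AA_def EE_def
    by (rule integral_le[OF g_int i1]) (use pt in blast)
  have "EE x \<le> integral {0..x} (\<lambda>u. g u / (1 - x))" unfolding EE_def
    by (rule integral_le[OF i1]) (auto intro: integrable_on_divide g_int simp: pt)
  then show "EE x \<le> AA x / (1 - x)" unfolding AA_def by simp
  show "0 \<le> AA x" unfolding AA_def using g_nonneg x
    by (intro integral_nonneg g_int) auto
qed

lemma ln_bounds:
  fixes B :: real assumes "0 < B" "B < 1"
  shows "B \<le> - ln (1 - B)" "- ln (1 - B) \<le> B / (1 - B)"
proof -
  show "B \<le> - ln (1 - B)" using ln_le_minus_one[of "1 - B"] assms by simp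
  have "ln (inverse (1 - B)) \<le> inverse (1 - B) - 1" using assms by (intro ln_le_minus_one) simp
  also have "inverse (1 - B) - 1 = B / (1 - B)" using assms by (simp add: field_simps)
  finally show "- ln (1 - B) \<le> B / (1 - B)" by (simp add: ln_inverse)
qed

lemma B_bounds: assumes x: "0 < x" "x < 1" shows "0 < x * g x" "x * g x < 1"
proof -
  show "0 < x * g x" using g_pos[OF x] x by simp
  have "x * g x \<le> x * 1" using g_le1[of x] x by (intro mult_left_mono) auto
  then show "x * g x < 1" using x by linarith
qed

lemma lim0: "((\<lambda>x. EE x / (- ln (1 - x * g x))) \<longlongrightarrow> 1 / real (d - K + 1)) (at_right 0)"
proof -
  define c where "c = 1 / real (d - K + 1)"
  have r0p: "r 0 > 0" using r_pos[of 0] by simp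
  have AB: "((\<lambda>x. AA x / (x * g x)) \<longlongrightarrow> c) (at_right 0)"
  proof -
    have L0: "((\<lambda>x. (AA x / x ^ (d - K + 1)) / r x) \<longlongrightarrow> (r 0 / real (d - K + 1)) / r 0) (at_right 0)"
      using r0p by (intro tendsto_divide AA_over) (auto intro: isCont_tendsto_compose[OF r_isCont] tendsto_ident_at)
    have cc: "(r 0 / real (d - K + 1)) / r 0 = c" unfolding c_def using r0p by simp
    have L: "((\<lambda>x. (AA x / x ^ (d - K + 1)) / r x) \<longlongrightarrow> c) (at_right 0)"
      using L0 unfolding cc .
    have ev: "\<forall>\<^sub>F x in at_right 0. (AA x / x ^ (d - K + 1)) / r x = AA x / (x * g x)"
      using ev01
    proof (rule eventually_mono)
      fix x :: real assume x: "0 < x \<and> x < 1"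
      have e: "x * g x = x ^ (d - K + 1) * r x" using g_r[of x] by simp
      show "(AA x / x ^ (d - K + 1)) / r x = AA x / (x * g x)" unfolding e by (simp add: divide_divide_eq_left)
    qed
    show ?thesis by (rule Lim_transform_eventually[OF L ev])
  qed
  have Bl: "((\<lambda>x. x * g x) \<longlongrightarrow> 0 * g 0) (at_right 0)"
    by (intro tendsto_mult tendsto_ident_at isCont_tendsto_compose[OF g_isCont])
  have xl: "((\<lambda>x::real. x) \<longlongrightarrow> 0) (at_right 0)" by (rule tendsto_ident_at)
  show ?thesis
  proof (rule tendsto_sandwich[of "\<lambda>x. (AA x / (x * g x)) * (1 - x * g x)" _ _ "\<lambda>x. (AA x / (x * g x)) / (1 - x)"])
    show "\<forall>\<^sub>F x in at_right 0. AA x / (x * g x) * (1 - x * g x) \<le> EE x / - ln (1 - x * g x)"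
      using ev01
    proof (rule eventually_mono)
      fix x :: real assume x: "0 < x \<and> x < 1"
      note b = B_bounds[of x] x
      note e = EE_bounds[of x] x
      note l = ln_bounds[of "x * g x"] b
      have "AA x / (x * g x / (1 - x * g x)) \<le> EE x / - ln (1 - x * g x)"
        using b e l by (intro frac_le) auto
      moreover have "AA x / (x * g x / (1 - x * g x)) = AA x / (x * g x) * (1 - x * g x)"
        by simp
      ultimately show "AA x / (x * g x) * (1 - x * g x) \<le> EE x / - ln (1 - x * g x)" by simp
    qed
    show "\<forall>\<^sub>F x in at_right 0. EE x / - ln (1 - x * g x) \<le> AA x / (x * g x) / (1 - x)"
      using ev01
    proof (rule eventually_mono)
      fix x :: real assume x: "0 < x \<and> x < 1"
      note b = B_bounds[of x] x
      note e = EE_bounds[of x] x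
      note l = ln_bounds[of "x * g x"] b
      have "EE x / - ln (1 - x * g x) \<le> (AA x / (1 - x)) / (x * g x)"
        using b e l by (intro frac_le) auto
      then show "EE x / - ln (1 - x * g x) \<le> AA x / (x * g x) / (1 - x)" by (simp add: mult.commute)
    qed
    have "((\<lambda>x. (AA x / (x * g x)) * (1 - x * g x)) \<longlongrightarrow> c * (1 - 0 * g 0)) (at_right 0)"
      by (intro tendsto_mult AB tendsto_diff tendsto_const Bl)
    then show "((\<lambda>x. (AA x / (x * g x)) * (1 - x * g x)) \<longlongrightarrow> 1 / real (d - K + 1)) (at_right 0)"
      by (simp add: c_def)
    have "((\<lambda>x. (AA x / (x * g x)) / (1 - x)) \<longlongrightarrow> c / (1 - 0)) (at_right 0)"
      by (intro tendsto_divide AB tendsto_diff tendsto_const xl) simp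
    then show "((\<lambda>x. (AA x / (x * g x)) / (1 - x)) \<longlongrightarrow> 1 / real (d - K + 1)) (at_right 0)"
      by (simp add: c_def)
  qed
qed

end

context LL begin

definition "Q u = (1 - g u) / (1 - u)"

lemma Q_nonneg: "0 \<le> u \<Longrightarrow> u < 1 \<Longrightarrow> 0 \<le> Q u"
  unfolding Q_def using g_le1[of u] by simp

lemma Q_id: "u < 1 \<Longrightarrow> 1 - x * g u = (1 - x) + x * (1 - u) * Q u"
  unfolding Q_def by (simp add: field_simps)

lemma Q_lim: "(Q \<longlongrightarrow> real (d - K) / real K) (at_left 1)"
  unfolding Q_def[abs_def] by (rule g_slope1)

lemma a_pos: "real (d - K) / real K > 0" using K1 Kd by simp

lemma L_top: "filterlim (\<lambda>x::real. - ln (1 - x)) at_top (at_left 1)"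
proof -
  have "filterlim (\<lambda>x::real. 1 - x) (at_right 0) (at_left 1)"
  proof (rule tendsto_imp_filterlim_at_right)
    have "((\<lambda>x::real. 1 - x) \<longlongrightarrow> 1 - 1) (at_left 1)"
      by (intro tendsto_diff tendsto_const tendsto_ident_at)
    then show "((\<lambda>x::real. 1 - x) \<longlongrightarrow> 0) (at_left 1)" by simp
    show "\<forall>\<^sub>F x in at_left 1. 0 < 1 - (x::real)"
      using ev01l by (rule eventually_mono) simp
  qed
  then have "filterlim (\<lambda>x::real. ln (1 - x)) at_bot (at_left 1)"
    by (rule filterlim_compose[OF ln_at_0])
  then show ?thesis unfolding filterlim_uminus_at_top by simp
qed

lemma lnp_ratio: "((\<lambda>x. (- ln (1 - x * g x)) / (- ln (1 - x))) \<longlongrightarrow> 1) (at_left 1)"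
proof -
  define a where "a = real (d - K) / real K"
  have Ql: "(Q \<longlongrightarrow> a) (at_left 1)" unfolding a_def by (rule Q_lim)
  have "((\<lambda>x. ln (1 + x * Q x)) \<longlongrightarrow> ln (1 + 1 * a)) (at_left 1)"
    using a_pos unfolding a_def[symmetric]
    by (intro tendsto_ln tendsto_add tendsto_const tendsto_mult tendsto_ident_at Ql) simp
  then have "((\<lambda>x. ln (1 + x * Q x) / (- ln (1 - x))) \<longlongrightarrow> 0) (at_left 1)"
    by (rule tendsto_divide_0[OF _ filterlim_at_top_imp_at_infinity[OF L_top]])
  then have lim: "((\<lambda>x. 1 - ln (1 + x * Q x) / (- ln (1 - x))) \<longlongrightarrow> 1 - 0) (at_left 1)"
    by (intro tendsto_diff tendsto_const)
  have ev: "\<forall>\<^sub>F x in at_left 1. 1 - ln (1 + x * Q x) / (- ln (1 - x)) = (- ln (1 - x * g x)) / (- ln (1 - x))"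
    using ev01l
  proof (rule eventually_mono)
    fix x :: real assume x: "0 < x \<and> x < 1"
    have q: "0 \<le> Q x" using Q_nonneg[of x] x by simp
    have "1 - x * g x = (1 - x) * (1 + x * Q x)"
      using Q_id[of x x] x by (simp add: algebra_simps)
    moreover have "1 + x * Q x > 0" using x q by (simp add: add_pos_nonneg)
    ultimately have e: "ln (1 - x * g x) = ln (1 - x) + ln (1 + x * Q x)"
      using x by (simp add: ln_mult)
    have "ln (1 - x) < 0" using x by simp
    then show "1 - ln (1 + x * Q x) / (- ln (1 - x)) = (- ln (1 - x * g x)) / (- ln (1 - x))"
      unfolding e by (simp add: field_simps)
  qed
  show ?thesis using Lim_transform_eventually[OF lim ev] by simp
qed

lemma int_recip:
  fixes al be t x :: real
  assumes "0 < al" "0 < be" "t \<le> x" "x \<le> 1"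
  shows "((\<lambda>u. 1 / (al + be * (1 - u))) has_integral (ln (al + be * (1 - t)) - ln (al + be * (1 - x))) / be) {t..x}"
proof -
  have "((\<lambda>u. 1 / (al + be * (1 - u))) has_integral
     ((- ln (al + be * (1 - x)) / be) - (- ln (al + be * (1 - t)) / be))) {t..x}"
  proof (rule fundamental_theorem_of_calculus[OF assms(3)])
    fix u assume u: "u \<in> {t..x}"
    have pos: "al + be * (1 - u) > 0" using assms u by (intro add_pos_nonneg) auto
    have dz: "((\<lambda>u. al + be * (1 - u)) has_real_derivative (- be)) (at u within {t..x})"
      by (auto intro!: derivative_eq_intros)
    have "((\<lambda>u. - ln (al + be * (1 - u)) / be) has_real_derivative
        - (inverse (al + be * (1 - u)) * (- be)) / be) (at u within {t..x})"
      by (rule DERIV_cdivide[OF DERIV_minus[OF DERIV_chain2[OF DERIV_ln[OF pos] dz]]])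
    moreover have "- (inverse (al + be * (1 - u)) * (- be)) / be = 1 / (al + be * (1 - u))"
      using assms(2) by (simp add: inverse_eq_divide)
    ultimately show "((\<lambda>u. - ln (al + be * (1 - u)) / be) has_vector_derivative 1 / (al + be * (1 - u))) (at u within {t..x})"
      by (simp add: has_real_derivative_iff_has_vector_derivative)
  qed
  then show ?thesis by (simp add: diff_divide_distrib)
qed

lemma exists_eps:
  fixes f :: "real \<Rightarrow> real"
  assumes "(f \<longlongrightarrow> l) (at_right 0)" "c < l" "0 < e0"
  shows "\<exists>e. 0 < e \<and> e < e0 \<and> c < f e"
proof -
  have "\<forall>\<^sub>F e in at_right 0. c < f e" using order_tendstoD(1)[OF assms(1,2)] .
  moreover have "\<forall>\<^sub>F e in at_right (0::real). 0 < e \<and> e < e0"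
    using eventually_at_right_real[OF assms(3)] by (rule eventually_mono) auto
  ultimately have "\<forall>\<^sub>F e in at_right (0::real). 0 < e \<and> e < e0 \<and> c < f e"
    by eventually_elim auto
  then show ?thesis by (rule eventually_happens'[rotated]) simp
qed

lemma exists_eps2:
  fixes f :: "real \<Rightarrow> real"
  assumes "(f \<longlongrightarrow> l) (at_right 0)" "l < c" "0 < e0"
  shows "\<exists>e. 0 < e \<and> e < e0 \<and> f e < c"
proof -
  have "\<forall>\<^sub>F e in at_right 0. f e < c" using order_tendstoD(2)[OF assms(1,2)] .
  moreover have "\<forall>\<^sub>F e in at_right (0::real). 0 < e \<and> e < e0"
    using eventually_at_right_real[OF assms(3)] by (rule eventually_mono) auto
  ultimately have "\<forall>\<^sub>F e in at_right (0::real). 0 < e \<and> e < e0 \<and> f e < c"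
    by eventually_elim auto
  then show ?thesis by (rule eventually_happens'[rotated]) simp
qed

lemma near1:
  fixes e :: real assumes "0 < e"
  shows "\<exists>t. 0 < t \<and> t < 1 \<and> (\<forall>u. t \<le> u \<and> u < 1 \<longrightarrow>
     Q u \<le> real (d - K) / real K + e \<and> real (d - K) / real K - e \<le> Q u \<and> 1 - e \<le> g u)"
proof -
  define a where "a = real (d - K) / real K"
  have "\<forall>\<^sub>F u in at_left 1. Q u < a + e" using order_tendstoD(2)[OF Q_lim[folded a_def]] assms by simp
  moreover have "\<forall>\<^sub>F u in at_left 1. a - e < Q u" using order_tendstoD(1)[OF Q_lim[folded a_def]] assms by simp
  moreover have "((\<lambda>u. g u) \<longlongrightarrow> g 1) (at_left 1)"
    by (intro isCont_tendsto_compose[OF g_isCont] tendsto_ident_at)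
  then have "\<forall>\<^sub>F u in at_left 1. 1 - e < g u" using order_tendstoD(1) assms g1 by fastforce
  ultimately have "\<forall>\<^sub>F u in at_left 1. Q u \<le> a + e \<and> a - e \<le> Q u \<and> 1 - e \<le> g u"
    by eventually_elim auto
  then obtain b where b: "b < 1" "\<And>y. b < y \<Longrightarrow> y < 1 \<Longrightarrow> Q y \<le> a + e \<and> a - e \<le> Q y \<and> 1 - e \<le> g y"
    unfolding eventually_at_left_field by blast
  define t where "t = (max b 0 + 1) / 2"
  have "0 < t" "t < 1" "b < t" using b(1) by (auto simp: t_def)
  then show ?thesis unfolding a_def[symmetric] using b(2) by (intro exI[of _ t]) auto
qed

end

context LL begin

lemma EE_split:
  assumes "0 \<le> t" "t \<le> x" "x < 1"
  shows "EE x = integral {0..t} (\<lambda>u. g u / (1 - x * g u)) + integral {t..x} (\<lambda>u. g u / (1 - x * g u))"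
proof -
  have "integral {0..t} (\<lambda>u. g u / (1 - x * g u)) + integral {t..x} (\<lambda>u. g u / (1 - x * g u))
      = integral {0..x} (\<lambda>u. g u / (1 - x * g u))"
    by (rule Henstock_Kurzweil_Integration.integral_combine) (use assms in \<open>auto intro: integrand_int\<close>)
  then show ?thesis unfolding EE_def by simp
qed

lemma lower_pt:
  fixes e t x :: real
  defines "a \<equiv> real (d - K) / real K"
  assumes e: "0 < e" "e < 1" and t: "0 < t" "t < 1"
    and tp: "\<And>u. t \<le> u \<Longrightarrow> u < 1 \<Longrightarrow> Q u \<le> a + e \<and> 1 - e \<le> g u"
    and x: "t < x" "x < 1"
  shows "(1 - e) / (a + e) * (ln ((a + e) * (1 - t)) - ln (1 + (a + e)) + (- ln (1 - x))) \<le> EE x"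
proof -
  define be where "be = a + e"
  have a0: "a > 0" unfolding a_def by (rule a_pos)
  have be0: "be > 0" unfolding be_def using a0 e by simp
  have i0: "0 \<le> integral {0..t} (\<lambda>u. g u / (1 - x * g u))"
  proof (rule integral_nonneg)
    show "(\<lambda>u. g u / (1 - x * g u)) integrable_on {0..t}" using x t by (intro integrand_int) auto
    fix u assume u: "u \<in> {0..t}"
    then have "0 \<le> g u" "1 - x * g u \<ge> 1 - x" using g_nonneg[of u] den_pos[of x u] t x by auto
    then show "0 \<le> g u / (1 - x * g u)" using x by simp
  qed
  have hi: "((\<lambda>u. (1 - e) * (1 / ((1 - x) + be * (1 - u)))) has_integral
       (1 - e) * ((ln ((1 - x) + be * (1 - t)) - ln ((1 - x) + be * (1 - x))) / be)) {t..x}"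
    using x be0 by (intro has_integral_mult_right int_recip) auto
  have i1: "(1 - e) * ((ln ((1 - x) + be * (1 - t)) - ln ((1 - x) + be * (1 - x))) / be)
      \<le> integral {t..x} (\<lambda>u. g u / (1 - x * g u))"
  proof (rule has_integral_le[OF hi])
    show "((\<lambda>u. g u / (1 - x * g u)) has_integral integral {t..x} (\<lambda>u. g u / (1 - x * g u))) {t..x}"
      using x t by (intro integrable_integral integrand_int) auto
    fix u assume u: "u \<in> {t..x}"
    then have u1: "t \<le> u" "u < 1" "0 \<le> u" using x t by auto
    have q: "Q u \<le> be" "1 - e \<le> g u" using tp[OF u1(1,2)] by (auto simp: be_def)
    have q0: "0 \<le> Q u" using Q_nonneg u1 by simp
    have D: "1 - x * g u = (1 - x) + x * (1 - u) * Q u" using Q_id[OF u1(2)] .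
    have "x * (1 - u) * Q u \<le> 1 * (1 - u) * Q u"
      using x t u1 q0 by (intro mult_right_mono) auto
    also have "\<dots> \<le> (1 - u) * be" using q u1 by (simp add: mult_left_mono)
    finally have D1: "1 - x * g u \<le> (1 - x) + be * (1 - u)" unfolding D by (simp add: mult.commute)
    have "1 - x * g u \<ge> 1 - x" by (rule den_pos) (use x t u1 in auto)
    then have D0: "1 - x * g u > 0" using x by linarith
    have "(1 - e) / ((1 - x) + be * (1 - u)) \<le> (1 - e) / (1 - x * g u)"
      using D0 D1 e by (intro divide_left_mono) auto
    also have "\<dots> \<le> g u / (1 - x * g u)" using q D0 by (intro divide_right_mono) auto
    finally show "(1 - e) * (1 / ((1 - x) + be * (1 - u))) \<le> g u / (1 - x * g u)" by simp
  qed
  have bt: "be * (1 - t) > 0" using be0 t by simp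
  have l1: "ln (be * (1 - t)) \<le> ln ((1 - x) + be * (1 - t))"
    using bt x t by (subst ln_le_cancel_iff) auto
  have l2: "ln ((1 - x) + be * (1 - x)) = ln (1 - x) + ln (1 + be)"
  proof -
    have "(1 - x) + be * (1 - x) = (1 - x) * (1 + be)" by (simp add: algebra_simps)
    then show ?thesis using x be0 by (simp add: ln_mult)
  qed
  have "(1 - e) / be * (ln (be * (1 - t)) - ln (1 + be) + (- ln (1 - x)))
      \<le> (1 - e) * ((ln ((1 - x) + be * (1 - t)) - ln ((1 - x) + be * (1 - x))) / be)"
  proof -
    have "ln (be * (1 - t)) - ln (1 + be) + (- ln (1 - x)) \<le> ln ((1 - x) + be * (1 - t)) - ln ((1 - x) + be * (1 - x))"
      using l1 l2 by simp
    then have "(1 - e) / be * (ln (be * (1 - t)) - ln (1 + be) + (- ln (1 - x))) \<le>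
        (1 - e) / be * (ln ((1 - x) + be * (1 - t)) - ln ((1 - x) + be * (1 - x)))"
      using e be0 by (intro mult_left_mono) auto
    then show ?thesis by simp
  qed
  also have "\<dots> \<le> EE x" using i0 i1 EE_split[of t x] t x by simp
  finally show ?thesis unfolding be_def .
qed

lemma upper_pt:
  fixes e t x M :: real
  defines "a \<equiv> real (d - K) / real K"
  assumes e: "0 < e" "e < a" and t: "0 < t" "t < 1"
    and tp: "\<And>u. t \<le> u \<Longrightarrow> u < 1 \<Longrightarrow> a - e \<le> Q u"
    and M: "\<And>u. u \<in> {0..t} \<Longrightarrow> g u / (1 - g u) \<le> M"
    and x: "t < x" "x < 1"
  shows "EE x \<le> M * t + (- ln (1 - x)) / (x * (a - e))"
proof -
  define be where "be = x * (a - e)"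
  have be0: "be > 0" unfolding be_def using e t x by simp
  have i0: "integral {0..t} (\<lambda>u. g u / (1 - x * g u)) \<le> integral {0..t} (\<lambda>_. M)"
  proof (rule integral_le)
    show "(\<lambda>u. g u / (1 - x * g u)) integrable_on {0..t}" using x t by (intro integrand_int) auto
    show "(\<lambda>_. M) integrable_on {0..t}" by (intro integrable_continuous_real continuous_intros)
    fix u assume u: "u \<in> {0..t}"
    then have u1: "0 \<le> u" "u < 1" using t by auto
    have g0: "0 \<le> g u" using g_nonneg[of u] u1 by simp
    have gl: "g u < 1" using g_lt1 u1 by simp
    have "x * g u \<le> 1 * g u" using x t g0 by (intro mult_right_mono) auto
    then have D1: "1 - g u \<le> 1 - x * g u" by simp
    have "g u / (1 - x * g u) \<le> g u / (1 - g u)"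
      using D1 gl g0 by (intro divide_left_mono) auto
    also have "\<dots> \<le> M" using M u by simp
    finally show "g u / (1 - x * g u) \<le> M" .
  qed
  have i0': "integral {0..t} (\<lambda>_. M) = M * t" using t by simp
  have hi: "((\<lambda>u. 1 / ((1 - x) + be * (1 - u))) has_integral
       (ln ((1 - x) + be * (1 - t)) - ln ((1 - x) + be * (1 - x))) / be) {t..x}"
    using x be0 by (intro int_recip) auto
  have i1: "integral {t..x} (\<lambda>u. g u / (1 - x * g u)) \<le> (ln ((1 - x) + be * (1 - t)) - ln ((1 - x) + be * (1 - x))) / be"
  proof (rule has_integral_le[OF _ hi])
    show "((\<lambda>u. g u / (1 - x * g u)) has_integral integral {t..x} (\<lambda>u. g u / (1 - x * g u))) {t..x}"
      using x t by (intro integrable_integral integrand_int) auto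
    fix u assume u: "u \<in> {t..x}"
    then have u1: "t \<le> u" "u < 1" "0 \<le> u" using x t by auto
    have q: "a - e \<le> Q u" using tp[OF u1(1,2)] .
    have D: "1 - x * g u = (1 - x) + x * (1 - u) * Q u" using Q_id[OF u1(2)] .
    have "x * (1 - u) * (a - e) \<le> x * (1 - u) * Q u"
      using x t u1 q by (intro mult_left_mono) auto
    then have D1: "(1 - x) + be * (1 - u) \<le> 1 - x * g u" unfolding D be_def by (simp add: mult_ac)
    have bu: "be * (1 - u) \<ge> 0" using be0 u1 by simp
    have D2: "(1 - x) + be * (1 - u) > 0" using bu x by linarith
    have D0: "1 - x * g u > 0" using D1 D2 by linarith
    have "g u / (1 - x * g u) \<le> 1 / (1 - x * g u)"
      using g_le1[of u] u1 D0 by (intro divide_right_mono) auto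
    also have "\<dots> \<le> 1 / ((1 - x) + be * (1 - u))"
      using D1 D2 by (intro divide_left_mono) auto
    finally show "g u / (1 - x * g u) \<le> 1 / ((1 - x) + be * (1 - u))" .
  qed
  have bt: "be * (1 - t) \<ge> 0" using be0 t by simp
  have "be * (1 - t) \<le> be * 1" using be0 t by (intro mult_left_mono) auto
  then have l1: "ln ((1 - x) + be * (1 - t)) \<le> ln (1 + be)"
    using bt x t by (subst ln_le_cancel_iff) auto
  have l2: "ln ((1 - x) + be * (1 - x)) = ln (1 - x) + ln (1 + be)"
  proof -
    have "(1 - x) + be * (1 - x) = (1 - x) * (1 + be)" by (simp add: algebra_simps)
    then show ?thesis using x be0 by (simp add: ln_mult)
  qed
  have "(ln ((1 - x) + be * (1 - t)) - ln ((1 - x) + be * (1 - x))) / be \<le> (- ln (1 - x)) / be"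
    using l1 l2 be0 by (intro divide_right_mono) auto
  then have "EE x \<le> M * t + (- ln (1 - x)) / be"
    using EE_split[of t x] t x i0 i0' i1 by linarith
  then show ?thesis unfolding be_def .
qed

end

context LL begin


lemma EL: "((\<lambda>x. EE x / (- ln (1 - x))) \<longlongrightarrow> 1 / (real (d - K) / real K)) (at_left 1)"
proof -
  define a where "a = real (d - K) / real K"
  have a0: "a > 0" unfolding a_def by (rule a_pos)
  have L0: "((\<lambda>x::real. C / (- ln (1 - x))) \<longlongrightarrow> 0) (at_left 1)" for C
    by (rule tendsto_divide_0[OF tendsto_const filterlim_at_top_imp_at_infinity[OF L_top]])
  show ?thesis unfolding a_def[symmetric]
  proof (rule order_tendstoI)
    fix c assume c: "c < 1 / a"
    have "((\<lambda>e. (1 - e) / (a + e)) \<longlongrightarrow> (1 - 0) / (a + 0)) (at_right 0)"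
      using a0 by (intro tendsto_divide tendsto_diff tendsto_add tendsto_const tendsto_ident_at) auto
    then have "((\<lambda>e. (1 - e) / (a + e)) \<longlongrightarrow> 1 / a) (at_right 0)" by simp
    from exists_eps[OF this c, of 1] obtain e where e: "0 < e" "e < 1" "c < (1 - e) / (a + e)" by auto
    from near1[OF e(1)] obtain t where t: "0 < t" "t < 1"
      and tp: "\<And>u. t \<le> u \<Longrightarrow> u < 1 \<Longrightarrow> Q u \<le> a + e \<and> a - e \<le> Q u \<and> 1 - e \<le> g u"
      unfolding a_def by blast
    define K0 where "K0 = ln ((a + e) * (1 - t)) - ln (1 + (a + e))"
    have "((\<lambda>x. (1 - e) / (a + e) * (1 + K0 / (- ln (1 - x)))) \<longlongrightarrow> (1 - e) / (a + e) * (1 + 0)) (at_left 1)"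
      by (intro tendsto_mult tendsto_add tendsto_const L0)
    then have "\<forall>\<^sub>F x in at_left 1. c < (1 - e) / (a + e) * (1 + K0 / (- ln (1 - x)))"
      using e(3) by (intro order_tendstoD(1)) auto
    moreover have "\<forall>\<^sub>F x in at_left 1. x \<in> {t<..<1}" using eventually_at_left_real[OF t(2)] .
    ultimately show "\<forall>\<^sub>F x in at_left 1. c < EE x / (- ln (1 - x))"
    proof eventually_elim
      case (elim x)
      then have x: "t < x" "x < 1" by auto
      have lp: "- ln (1 - x) > 0" using x t by simp
      have lo: "(1 - e) / (a + e) * (K0 + (- ln (1 - x))) \<le> EE x"
        using lower_pt[OF e(1,2) t, of x] tp x unfolding K0_def a_def by auto
      have "(1 - e) / (a + e) * (1 + K0 / (- ln (1 - x))) = (1 - e) / (a + e) * (K0 + (- ln (1 - x))) / (- ln (1 - x))"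
      proof -
        have gen: "\<And>L C::real. L > 0 \<Longrightarrow> C * (1 + K0 / L) = C * (K0 + L) / L"
          by (simp add: field_simps)
        show ?thesis by (rule gen[OF lp])
      qed
      also have "\<dots> \<le> EE x / (- ln (1 - x))" using lo lp by (intro divide_right_mono) auto
      finally show ?case using elim by simp
    qed
  next
    fix c assume c: "1 / a < c"
    have "((\<lambda>e. 1 / (a - e)) \<longlongrightarrow> 1 / (a - 0)) (at_right 0)"
      using a0 by (intro tendsto_divide tendsto_diff tendsto_const tendsto_ident_at) auto
    then have "((\<lambda>e. 1 / (a - e)) \<longlongrightarrow> 1 / a) (at_right 0)" by simp
    from exists_eps2[OF this c a0] obtain e where e: "0 < e" "e < a" "1 / (a - e) < c" by auto
    from near1[OF e(1)] obtain t where t: "0 < t" "t < 1"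
      and tp: "\<And>u. t \<le> u \<Longrightarrow> u < 1 \<Longrightarrow> Q u \<le> a + e \<and> a - e \<le> Q u \<and> 1 - e \<le> g u"
      unfolding a_def by blast
    have "continuous_on {0..t} (\<lambda>u. g u / (1 - g u))"
      apply (intro continuous_intros g_cont)
      subgoal proof (intro ballI)
        fix u :: real assume "u \<in> {0..t}" then show "1 - g u \<noteq> 0" using g_lt1[of u] t by auto
      qed
      done
    then obtain u0 where u0: "\<And>y. y \<in> {0..t} \<Longrightarrow> g y / (1 - g y) \<le> g u0 / (1 - g u0)"
      using continuous_attains_sup[of "{0..t}" "\<lambda>u. g u / (1 - g u)"] t by (metis atLeastAtMost_iff compact_Icc empty_iff less_eq_real_def)
    define M where "M = g u0 / (1 - g u0)"
    have "((\<lambda>x. M * t / (- ln (1 - x)) + 1 / (x * (a - e))) \<longlongrightarrow> 0 + 1 / (1 * (a - e))) (at_left 1)"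
      using e by (intro tendsto_add L0 tendsto_divide tendsto_mult tendsto_const tendsto_ident_at) auto
    then have "\<forall>\<^sub>F x in at_left 1. M * t / (- ln (1 - x)) + 1 / (x * (a - e)) < c"
      using e(3) by (intro order_tendstoD(2)) auto
    moreover have "\<forall>\<^sub>F x in at_left 1. x \<in> {t<..<1}" using eventually_at_left_real[OF t(2)] .
    ultimately show "\<forall>\<^sub>F x in at_left 1. EE x / (- ln (1 - x)) < c"
    proof eventually_elim
      case (elim x)
      then have x: "t < x" "x < 1" by auto
      have lp: "- ln (1 - x) > 0" using x t by simp
      have up: "EE x \<le> M * t + (- ln (1 - x)) / (x * (a - e))"
        using upper_pt[OF e(1,2)[unfolded a_def] t, of M x] tp u0 x unfolding M_def a_def by auto
      have "EE x / (- ln (1 - x)) \<le> (M * t + (- ln (1 - x)) / (x * (a - e))) / (- ln (1 - x))"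
        using up lp by (intro divide_right_mono) auto
      also have "\<dots> = M * t / (- ln (1 - x)) + 1 / (x * (a - e))"
      proof -
        have B: "x * (a - e) \<noteq> 0" using x t e by simp
        have gen: "\<And>L A B::real. L > 0 \<Longrightarrow> B \<noteq> 0 \<Longrightarrow> (A + L / B) / L = A / L + 1 / B"
          by (simp add: field_simps)
        show ?thesis by (rule gen[OF lp B])
      qed
      finally show ?case using elim by simp
    qed
  qed
qed

lemma lim1: "((\<lambda>x. EE x / (- ln (1 - x * g x))) \<longlongrightarrow> real K / real (d - K)) (at_left 1)"
proof -
  have "((\<lambda>x. (EE x / (- ln (1 - x))) / ((- ln (1 - x * g x)) / (- ln (1 - x)))) \<longlongrightarrow>
      (1 / (real (d - K) / real K)) / 1) (at_left 1)"
    by (intro tendsto_divide EL lnp_ratio) simp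
  moreover have "(1 / (real (d - K) / real K)) / 1 = real K / real (d - K)" by simp
  moreover have "\<forall>\<^sub>F x in at_left 1. (EE x / (- ln (1 - x))) / ((- ln (1 - x * g x)) / (- ln (1 - x)))
      = EE x / (- ln (1 - x * g x))"
    using ev01l by (rule eventually_mono) (auto simp: field_simps)
  ultimately show ?thesis using Lim_transform_eventually by fastforce
qed

end


theorem proposition5p2:
  fixes d K :: nat and F :: "real \<Rightarrow> real \<Rightarrow> real"
  assumes "1 \<le> K" and "K < d"
    and F0: "\<And>lam. 0 < lam \<Longrightarrow> lam < 1 \<Longrightarrow> F lam 0 = lam"
    and Fode: "\<And>lam w. 0 < lam \<Longrightarrow> lam < 1 \<Longrightarrow> 0 \<le> w \<Longrightarrow>
       (F lam has_real_derivative (T_LL d K lam (F lam w) - F lam w)) (at w within {0..})"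
  shows "(((\<lambda>lam. - mean_wait d K lam (F lam) / ln (p_idle d K lam))
            \<longlongrightarrow> 1 / real (d - K + 1)) (at_right 0)) \<and>
         (((\<lambda>lam. - mean_wait d K lam (F lam) / ln (p_idle d K lam))
            \<longlongrightarrow> real K / real (d - K)) (at_left 1))"
proof -
  interpret LL d K using assms(1,2) by unfold_locales
  have eq: "EE lam / (- ln (1 - lam * gg d K lam)) = - mean_wait d K lam (F lam) / ln (p_idle d K lam)"
    if lam: "0 < lam \<and> lam < 1" for lam
  proof -
    have l: "0 < lam" "lam < 1" using lam by auto
    have "mean_wait d K lam (F lam) = EE lam" unfolding EE_def
    proof (rule ode_mean[where f="F lam", OF l F0[OF l]])
      fix w :: real assume w: "0 \<le> w"
      show "(F lam has_real_derivative lam * F lam w * gg d K (F lam w) - F lam w) (at w within {0..})"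
        using Fode[OF l w] by (simp add: T_eq)
    qed
    then show ?thesis by (simp add: p_eq)
  qed
  have e0: "\<forall>\<^sub>F lam in at_right 0. EE lam / (- ln (1 - lam * gg d K lam)) = - mean_wait d K lam (F lam) / ln (p_idle d K lam)"
    using ev01 by (rule eventually_mono) (rule eq)
  have e1: "\<forall>\<^sub>F lam in at_left 1. EE lam / (- ln (1 - lam * gg d K lam)) = - mean_wait d K lam (F lam) / ln (p_idle d K lam)"
    using ev01l by (rule eventually_mono) (rule eq)
  show ?thesis
    using Lim_transform_eventually[OF lim0 e0] Lim_transform_eventually[OF lim1 e1] by simp
qed

end
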